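(* Let $L:\mathbb{R}\to[1,\infty)$ be given by $L(x):=1/\mathbf{P}(\sigma_0>x)$ for a strictly positive random variable $\sigma_0$, and suppose $L$ is slowly varying at infinity, i.e. $\lim_{u\to\infty}L(uv)/L(u)=1$ for every $v>0$. Let $\varepsilon>\varepsilon'>0$ and let $x_t,y_t$ be non-decreasing functions of $t$ with $x_t,y_t\to\infty$. Then there exists $t'>0$ such that \[ \{t>t': L(x_t)>(1+\varepsilon)L(y_t)\}\subseteq\{t>t': L(x_t-y_t)>(1+\varepsilon')L(y_t)\}.\] *)

theory Defs
  imports "HOL-Probability.Probability"
begin

definition tailL :: "'a measure \<Rightarrow> ('a \<Rightarrow> real) \<Rightarrow> real \<Rightarrow> real" where
  "tailL M \<sigma> x = 1 / measure M {\<omega> \<in> space M. \<sigma> \<omega> > x}"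

definition slowly_varying :: "(real \<Rightarrow> real) \<Rightarrow> bool" where
  "slowly_varying L \<longleftrightarrow> (\<forall>v>0. ((\<lambda>u. L (u * v) / L u) \<longlongrightarrow> 1) at_top)"

end

theory Submission
  imports Defs
begin

theorem lemma3p3:
  fixes M :: "'a measure" and \<sigma>0 :: "'a \<Rightarrow> real"
    and x y :: "real \<Rightarrow> real" and \<epsilon> \<epsilon>' :: real
  assumes "prob_space M"
    and "\<sigma>0 \<in> borel_measurable M"
    and "\<forall>\<omega>\<in>space M. \<sigma>0 \<omega> > 0"
    and "\<forall>z. tailL M \<sigma>0 z \<in> {1..}"
    and "slowly_varying (tailL M \<sigma>0)"
    and "\<epsilon> > \<epsilon>'" and "\<epsilon>' > 0"
    and "mono x" and "mono y"
    and "filterlim x at_top at_top" and "filterlim y at_top at_top"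
  shows "\<exists>t'>0. {t. t > t' \<and> tailL M \<sigma>0 (x t) > (1 + \<epsilon>) * tailL M \<sigma>0 (y t)}
              \<subseteq> {t. t > t' \<and> tailL M \<sigma>0 (x t - y t) > (1 + \<epsilon>') * tailL M \<sigma>0 (y t)}"
proof -
  interpret prob_space M by fact
  define L where "L = tailL M \<sigma>0"
  have L1: "\<And>z. L z \<ge> 1" using assms(4) by (auto simp: L_def)
  have meas: "\<And>z. {\<omega> \<in> space M. \<sigma>0 \<omega> > z} \<in> sets M"
    using assms(2) by measurable
  have pos: "\<And>z. measure M {\<omega> \<in> space M. \<sigma>0 \<omega> > z} > 0"
  proof -
    fix z
    have "measure M {\<omega> \<in> space M. \<sigma>0 \<omega> > z} \<noteq> 0"
      using L1[of z] by (auto simp: L_def tailL_def)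
    then show "measure M {\<omega> \<in> space M. \<sigma>0 \<omega> > z} > 0"
      using measure_nonneg[of M] by (simp add: less_le)
  qed
  have Lmono: "\<And>a b. a \<le> b \<Longrightarrow> L a \<le> L b"
  proof -
    fix a b :: real assume ab: "a \<le> b"
    have "measure M {\<omega> \<in> space M. \<sigma>0 \<omega> > b} \<le> measure M {\<omega> \<in> space M. \<sigma>0 \<omega> > a}"
      using ab by (intro finite_measure_mono meas) auto
    then show "L a \<le> L b" unfolding L_def tailL_def
      using pos[of b] by (intro divide_left_mono) auto
  qed
  have sv: "\<And>v. v > 0 \<Longrightarrow> ((\<lambda>u. L (u * v) / L u) \<longlongrightarrow> 1) at_top"
    using assms(5) by (auto simp: slowly_varying_def L_def)
  have e1: "eventually (\<lambda>t. L (y t * 2) / L (y t) < 1 + \<epsilon>) at_top"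
  proof -
    have "((\<lambda>t. L (y t * 2) / L (y t)) \<longlongrightarrow> 1) at_top"
      using filterlim_compose[OF sv[of 2] assms(11)] by simp
    then show ?thesis using assms(6,7) by (intro order_tendstoD) auto
  qed
  define c where "c = (1 + \<epsilon>') / (1 + \<epsilon>)"
  have c1: "c < 1" using assms(6,7) by (simp add: c_def)
  have e2: "eventually (\<lambda>t. L (x t * (1/2)) / L (x t) > c) at_top"
  proof -
    have "((\<lambda>t. L (x t * (1/2)) / L (x t)) \<longlongrightarrow> 1) at_top"
      using filterlim_compose[OF sv[of "1/2"] assms(10)] by simp
    then show ?thesis using c1 by (intro order_tendstoD) auto
  qed
  obtain t0 where t0: "\<And>t. t \<ge> t0 \<Longrightarrow> L (y t * 2) / L (y t) < 1 + \<epsilon> \<and> L (x t * (1/2)) / L (x t) > c"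
    using eventually_conj[OF e1 e2] unfolding eventually_at_top_linorder by blast
  show ?thesis
  proof (intro exI[of _ "max t0 1"] conjI subsetI)
    show "max t0 1 > (0::real)" by simp
    fix t assume "t \<in> {t. t > max t0 1 \<and> tailL M \<sigma>0 (x t) > (1 + \<epsilon>) * tailL M \<sigma>0 (y t)}"
    then have tt: "t > max t0 1" and hx: "L (x t) > (1 + \<epsilon>) * L (y t)" by (auto simp: L_def)
    have h1: "L (y t * 2) < (1 + \<epsilon>) * L (y t)" and h2: "L (x t * (1/2)) > c * L (x t)"
      using t0[of t] tt L1[of "y t"] L1[of "x t"] by (auto simp: field_simps)
    have "x t > 2 * y t"
    proof (rule ccontr)
      assume "\<not> x t > 2 * y t"
      then have "L (x t) \<le> L (y t * 2)" by (intro Lmono) auto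
      then show False using h1 hx by simp
    qed
    then have "L (x t * (1/2)) \<le> L (x t - y t)" by (intro Lmono) auto
    moreover have "c * L (x t) > (1 + \<epsilon>') * L (y t)"
    proof -
      have "c * L (x t) > c * ((1 + \<epsilon>) * L (y t))"
        using hx assms(6,7) by (intro mult_strict_left_mono) (auto simp: c_def)
      also have "c * ((1 + \<epsilon>) * L (y t)) = (1 + \<epsilon>') * L (y t)"
        using assms(6,7) by (simp add: c_def)
      finally show ?thesis .
    qed
    ultimately show "t \<in> {t. t > max t0 1 \<and> tailL M \<sigma>0 (x t - y t) > (1 + \<epsilon>') * tailL M \<sigma>0 (y t)}"
      using tt h2 by (auto simp: L_def)
  qed
qed

end
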